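(* Let $C\in\mathscr{C}$ and let $K_C$ be obtained as follows: choose a distinguished triangle $S[-1]\to C\overset{a}{\to}T\to S$ with $S\in\mathcal{S},T\in\mathcal{T}$; choose a distinguished triangle $U\to T\overset{b}{\to}V[1]\to U[1]$ with $U\in\mathcal{U},V\in\mathcal{V}$; and choose a distinguished triangle $V\to K_C\overset{k_C}{\to}C\overset{b\circ a}{\to}V[1]$. Then: (1) $K_C\in\mathscr{C}^-$; (2) if $C\in\mathscr{C}^+$, then $K_C\in\mathcal{H}$.
   Context: $\mathscr{C}$ is a triangulated category with shift $[1]$; subcategories are full, additive, closed under isomorphisms and direct summands. $\mathrm{Ext}^1(X,Y)=\mathscr{C}(X,Y[1])$. $\mathcal{M}\ast\mathcal{N}$ is the full subcategory of objects $C$ admitting a distinguished triangle $M\to C\to N\to M[1]$ with $M\in\mathcal{M}$, $N\in\mathcal{N}$. A cotorsion pair $(\mathcal{U},\mathcal{V})$: $\mathrm{Ext}^1(\mathcal{U},\mathcal{V})=0$ and $\mathscr{C}=\mathcal{U}\ast\mathcal{V}[1]$. Fix a twin cotorsion pair, i.e. cotorsion pairs $(\mathcal{S},\mathcal{T}),(\mathcal{U},\mathcal{V})$ with $\mathrm{Ext}^1(\mathcal{S},\mathcal{V})=0$. Put $\mathcal{W}=\mathcal{T}\cap\mathcal{U}$, $\mathscr{C}^-=\mathcal{S}[-1]\ast\mathcal{W}$, $\mathscr{C}^+=\mathcal{W}\ast\mathcal{V}[1]$, $\mathcal{H}=\mathscr{C}^+\cap\mathscr{C}^-$. *)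

theory Defs
  imports Main
begin

text \<open>A (pre)additive category with a shift functor and a class of distinguished
triangles.  Objects have type 'o, morphisms type 'm; hom sets are explicit.
cmp g f is the composite g after f.\<close>

record ('o, 'm) tcat =
  obj  :: "'o set"
  hom  :: "'o \<Rightarrow> 'o \<Rightarrow> 'm set"
  cmp  :: "'m \<Rightarrow> 'm \<Rightarrow> 'm"
  ide  :: "'o \<Rightarrow> 'm"
  madd :: "'m \<Rightarrow> 'm \<Rightarrow> 'm"
  mneg :: "'m \<Rightarrow> 'm"
  mzero :: "'o \<Rightarrow> 'o \<Rightarrow> 'm"
  sh   :: "'o \<Rightarrow> 'o"
  shm  :: "'m \<Rightarrow> 'm"
  dist :: "('o \<times> 'o \<times> 'o \<times> 'm \<times> 'm \<times> 'm) set"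

definition iso_mor :: "('o,'m,'x) tcat_scheme \<Rightarrow> 'o \<Rightarrow> 'o \<Rightarrow> 'm \<Rightarrow> bool" where
  "iso_mor C X Y f \<longleftrightarrow> f \<in> hom C X Y \<and>
     (\<exists>g \<in> hom C Y X. cmp C g f = ide C X \<and> cmp C f g = ide C Y)"

definition isomorphic :: "('o,'m,'x) tcat_scheme \<Rightarrow> 'o \<Rightarrow> 'o \<Rightarrow> bool" where
  "isomorphic C X Y \<longleftrightarrow> (\<exists>f. iso_mor C X Y f)"

definition zero_obj :: "('o,'m,'x) tcat_scheme \<Rightarrow> 'o \<Rightarrow> bool" where
  "zero_obj C Z \<longleftrightarrow> Z \<in> obj C \<and>
     (\<forall>X \<in> obj C. hom C Z X = {mzero C Z X} \<and> hom C X Z = {mzero C X Z})"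

definition is_biprod :: "('o,'m,'x) tcat_scheme \<Rightarrow> 'o \<Rightarrow> 'o \<Rightarrow> 'o
    \<Rightarrow> 'm \<Rightarrow> 'm \<Rightarrow> 'm \<Rightarrow> 'm \<Rightarrow> bool" where
  "is_biprod C X Y P i1 i2 p1 p2 \<longleftrightarrow> P \<in> obj C \<and>
     i1 \<in> hom C X P \<and> i2 \<in> hom C Y P \<and> p1 \<in> hom C P X \<and> p2 \<in> hom C P Y \<and>
     cmp C p1 i1 = ide C X \<and> cmp C p2 i2 = ide C Y \<and>
     cmp C p2 i1 = mzero C X Y \<and> cmp C p1 i2 = mzero C Y X \<and>
     madd C (cmp C i1 p1) (cmp C i2 p2) = ide C P"

definition additive_cat :: "('o,'m,'x) tcat_scheme \<Rightarrow> bool" where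
  "additive_cat C \<longleftrightarrow>
     (\<forall>X Y X' Y' f. f \<in> hom C X Y \<longrightarrow> f \<in> hom C X' Y' \<longrightarrow> X = X' \<and> Y = Y') \<and>
     (\<forall>X Y. (X \<notin> obj C \<or> Y \<notin> obj C) \<longrightarrow> hom C X Y = {}) \<and>
     (\<forall>X \<in> obj C. ide C X \<in> hom C X X) \<and>
     (\<forall>X \<in> obj C. \<forall>Y \<in> obj C. \<forall>Z \<in> obj C. \<forall>f \<in> hom C X Y. \<forall>g \<in> hom C Y Z.
        cmp C g f \<in> hom C X Z) \<and>
     (\<forall>X \<in> obj C. \<forall>Y \<in> obj C. \<forall>f \<in> hom C X Y.
        cmp C f (ide C X) = f \<and> cmp C (ide C Y) f = f) \<and>
     (\<forall>W \<in> obj C. \<forall>X \<in> obj C. \<forall>Y \<in> obj C. \<forall>Z \<in> obj C.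
        \<forall>f \<in> hom C W X. \<forall>g \<in> hom C X Y. \<forall>h \<in> hom C Y Z.
        cmp C h (cmp C g f) = cmp C (cmp C h g) f) \<and>
     (\<forall>X \<in> obj C. \<forall>Y \<in> obj C.
        mzero C X Y \<in> hom C X Y \<and>
        (\<forall>f \<in> hom C X Y. \<forall>g \<in> hom C X Y. madd C f g \<in> hom C X Y \<and> madd C f g = madd C g f) \<and>
        (\<forall>f \<in> hom C X Y. \<forall>g \<in> hom C X Y. \<forall>h \<in> hom C X Y.
           madd C (madd C f g) h = madd C f (madd C g h)) \<and>
        (\<forall>f \<in> hom C X Y. madd C (mzero C X Y) f = f \<and>
           mneg C f \<in> hom C X Y \<and> madd C (mneg C f) f = mzero C X Y)) \<and>
     (\<forall>X \<in> obj C. \<forall>Y \<in> obj C. \<forall>Z \<in> obj C.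
        \<forall>f \<in> hom C X Y. \<forall>f' \<in> hom C X Y. \<forall>g \<in> hom C Y Z. \<forall>g' \<in> hom C Y Z.
        cmp C (madd C g g') f = madd C (cmp C g f) (cmp C g' f) \<and>
        cmp C g (madd C f f') = madd C (cmp C g f) (cmp C g f')) \<and>
     (\<exists>Z. zero_obj C Z) \<and>
     (\<forall>X \<in> obj C. \<forall>Y \<in> obj C. \<exists>P i1 i2 p1 p2. is_biprod C X Y P i1 i2 p1 p2)"

definition shift_equiv :: "('o,'m,'x) tcat_scheme \<Rightarrow> bool" where
  "shift_equiv C \<longleftrightarrow>
     (\<forall>X \<in> obj C. sh C X \<in> obj C) \<and>
     (\<forall>X \<in> obj C. \<forall>Y \<in> obj C. bij_betw (shm C) (hom C X Y) (hom C (sh C X) (sh C Y))) \<and>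
     (\<forall>X \<in> obj C. shm C (ide C X) = ide C (sh C X)) \<and>
     (\<forall>X \<in> obj C. \<forall>Y \<in> obj C. \<forall>Z \<in> obj C. \<forall>f \<in> hom C X Y. \<forall>g \<in> hom C Y Z.
        shm C (cmp C g f) = cmp C (shm C g) (shm C f)) \<and>
     (\<forall>X \<in> obj C. \<forall>Y \<in> obj C. \<forall>f \<in> hom C X Y. \<forall>g \<in> hom C X Y.
        shm C (madd C f g) = madd C (shm C f) (shm C g)) \<and>
     (\<forall>Y \<in> obj C. \<exists>X \<in> obj C. isomorphic C (sh C X) Y)"

definition is_triangle :: "('o,'m,'x) tcat_scheme \<Rightarrow> 'o \<times> 'o \<times> 'o \<times> 'm \<times> 'm \<times> 'm \<Rightarrow> bool" where
  "is_triangle C t \<longleftrightarrow> (case t of (X, Y, Z, f, g, h) \<Rightarrow>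
     X \<in> obj C \<and> Y \<in> obj C \<and> Z \<in> obj C \<and>
     f \<in> hom C X Y \<and> g \<in> hom C Y Z \<and> h \<in> hom C Z (sh C X))"

definition tri_iso :: "('o,'m,'x) tcat_scheme \<Rightarrow> 'o \<times> 'o \<times> 'o \<times> 'm \<times> 'm \<times> 'm
    \<Rightarrow> 'o \<times> 'o \<times> 'o \<times> 'm \<times> 'm \<times> 'm \<Rightarrow> bool" where
  "tri_iso C t t' \<longleftrightarrow> (case t of (X, Y, Z, f, g, h) \<Rightarrow> case t' of (X', Y', Z', f', g', h') \<Rightarrow>
     (\<exists>u v w. iso_mor C X X' u \<and> iso_mor C Y Y' v \<and> iso_mor C Z Z' w \<and>
        cmp C v f = cmp C f' u \<and> cmp C w g = cmp C g' v \<and>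
        cmp C (shm C u) h = cmp C h' w))"

definition triangulated :: "('o,'m,'x) tcat_scheme \<Rightarrow> bool" where
  "triangulated C \<longleftrightarrow> additive_cat C \<and> shift_equiv C \<and>
     (\<forall>t \<in> dist C. is_triangle C t) \<and>
     \<comment> \<open>TR1\<close>
     (\<forall>t \<in> dist C. \<forall>t'. is_triangle C t' \<longrightarrow> tri_iso C t t' \<longrightarrow> t' \<in> dist C) \<and>
     (\<forall>X \<in> obj C. \<forall>Z. zero_obj C Z \<longrightarrow>
        (X, X, Z, ide C X, mzero C X Z, mzero C Z (sh C X)) \<in> dist C) \<and>
     (\<forall>X \<in> obj C. \<forall>Y \<in> obj C. \<forall>f \<in> hom C X Y. \<exists>Z g h. (X, Y, Z, f, g, h) \<in> dist C) \<and>
     \<comment> \<open>TR2\<close>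
     (\<forall>X Y Z f g h. is_triangle C (X, Y, Z, f, g, h) \<longrightarrow>
        ((X, Y, Z, f, g, h) \<in> dist C \<longleftrightarrow>
         (Y, Z, sh C X, g, h, mneg C (shm C f)) \<in> dist C)) \<and>
     \<comment> \<open>TR3\<close>
     (\<forall>X Y Z f g h X' Y' Z' f' g' h' u v.
        (X, Y, Z, f, g, h) \<in> dist C \<longrightarrow> (X', Y', Z', f', g', h') \<in> dist C \<longrightarrow>
        u \<in> hom C X X' \<longrightarrow> v \<in> hom C Y Y' \<longrightarrow> cmp C v f = cmp C f' u \<longrightarrow>
        (\<exists>w \<in> hom C Z Z'. cmp C w g = cmp C g' v \<and> cmp C (shm C u) h = cmp C h' w)) \<and>
     \<comment> \<open>TR4 (octahedral axiom)\<close>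
     (\<forall>X Y Z Z' X' Y' f g i i' j j' k k'.
        (X, Y, Z', f, i, i') \<in> dist C \<longrightarrow> (Y, Z, X', g, j, j') \<in> dist C \<longrightarrow>
        (X, Z, Y', cmp C g f, k, k') \<in> dist C \<longrightarrow>
        (\<exists>l m. (Z', Y', X', l, m, cmp C (shm C i) j') \<in> dist C \<and>
           cmp C l i = cmp C k g \<and> cmp C k' l = i' \<and>
           cmp C m k = j \<and> cmp C j' m = cmp C (shm C f) k'))"

text \<open>Subcategories: full (given by a class of objects), additive (contain a zero object,
closed under biproducts), closed under isomorphisms and direct summands.\<close>
definition subcat :: "('o,'m,'x) tcat_scheme \<Rightarrow> 'o set \<Rightarrow> bool" where
  "subcat C A \<longleftrightarrow> A \<subseteq> obj C \<and>
     (\<forall>X \<in> A. \<forall>Y. isomorphic C X Y \<longrightarrow> Y \<in> A) \<and>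
     (\<exists>Z \<in> A. zero_obj C Z) \<and>
     (\<forall>X Y P i1 i2 p1 p2. is_biprod C X Y P i1 i2 p1 p2 \<longrightarrow>
        (P \<in> A \<longleftrightarrow> X \<in> A \<and> Y \<in> A))"

definition shift_up :: "('o,'m,'x) tcat_scheme \<Rightarrow> 'o set \<Rightarrow> 'o set" where
  "shift_up C A = {Z \<in> obj C. \<exists>Y \<in> A. isomorphic C Z (sh C Y)}"

definition shift_down :: "('o,'m,'x) tcat_scheme \<Rightarrow> 'o set \<Rightarrow> 'o set" where
  "shift_down C A = {Z \<in> obj C. sh C Z \<in> A}"

definition ext1_zero :: "('o,'m,'x) tcat_scheme \<Rightarrow> 'o set \<Rightarrow> 'o set \<Rightarrow> bool" where
  "ext1_zero C A B \<longleftrightarrow> (\<forall>X \<in> A. \<forall>Y \<in> B. hom C X (sh C Y) = {mzero C X (sh C Y)})"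

definition star :: "('o,'m,'x) tcat_scheme \<Rightarrow> 'o set \<Rightarrow> 'o set \<Rightarrow> 'o set" where
  "star C M N = {Z \<in> obj C. \<exists>X \<in> M. \<exists>Y \<in> N. \<exists>f g h. (X, Z, Y, f, g, h) \<in> dist C}"

definition cotorsion_pair :: "('o,'m,'x) tcat_scheme \<Rightarrow> 'o set \<Rightarrow> 'o set \<Rightarrow> bool" where
  "cotorsion_pair C U V \<longleftrightarrow> subcat C U \<and> subcat C V \<and> ext1_zero C U V \<and>
     obj C = star C U (shift_up C V)"

definition twin_cotorsion_pair :: "('o,'m,'x) tcat_scheme \<Rightarrow> 'o set \<Rightarrow> 'o set
    \<Rightarrow> 'o set \<Rightarrow> 'o set \<Rightarrow> bool" where
  "twin_cotorsion_pair C S T U V \<longleftrightarrow> cotorsion_pair C S T \<and> cotorsion_pair C U V \<and>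
     ext1_zero C S V"

definition Cminus :: "('o,'m,'x) tcat_scheme \<Rightarrow> 'o set \<Rightarrow> 'o set \<Rightarrow> 'o set \<Rightarrow> 'o set" where
  "Cminus C S T U = star C (shift_down C S) (T \<inter> U)"

definition Cplus :: "('o,'m,'x) tcat_scheme \<Rightarrow> 'o set \<Rightarrow> 'o set \<Rightarrow> 'o set \<Rightarrow> 'o set" where
  "Cplus C T U V = star C (T \<inter> U) (shift_up C V)"

definition heart :: "('o,'m,'x) tcat_scheme \<Rightarrow> 'o set \<Rightarrow> 'o set \<Rightarrow> 'o set \<Rightarrow> 'o set \<Rightarrow> 'o set" where
  "heart C S T U V = Cplus C T U V \<inter> Cminus C S T U"

end

theory Submission
  imports Defs
begin


locale TC =
  fixes C :: "('o,'m) tcat"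
  assumes tri: "triangulated C"
begin

lemma add_cat: "additive_cat C" using tri unfolding triangulated_def by (elim conjE)
lemma shift_eq: "shift_equiv C" using tri unfolding triangulated_def by (elim conjE)

lemma A1: "\<forall>X Y X' Y' f. f \<in> hom C X Y \<longrightarrow> f \<in> hom C X' Y' \<longrightarrow> X = X' \<and> Y = Y'"
  using add_cat unfolding additive_cat_def by (elim conjE)
lemma A2: "\<forall>X Y. (X \<notin> obj C \<or> Y \<notin> obj C) \<longrightarrow> hom C X Y = {}"
  using add_cat unfolding additive_cat_def by (elim conjE)
lemma A3: "\<forall>X \<in> obj C. ide C X \<in> hom C X X"
  using add_cat unfolding additive_cat_def by (elim conjE)
lemma A4: "\<forall>X \<in> obj C. \<forall>Y \<in> obj C. \<forall>Z \<in> obj C. \<forall>f \<in> hom C X Y. \<forall>g \<in> hom C Y Z.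
        cmp C g f \<in> hom C X Z"
  using add_cat unfolding additive_cat_def by (elim conjE)
lemma A5: "\<forall>X \<in> obj C. \<forall>Y \<in> obj C. \<forall>f \<in> hom C X Y.
        cmp C f (ide C X) = f \<and> cmp C (ide C Y) f = f"
  using add_cat unfolding additive_cat_def by (elim conjE)
lemma A6: "\<forall>W \<in> obj C. \<forall>X \<in> obj C. \<forall>Y \<in> obj C. \<forall>Z \<in> obj C.
        \<forall>f \<in> hom C W X. \<forall>g \<in> hom C X Y. \<forall>h \<in> hom C Y Z.
        cmp C h (cmp C g f) = cmp C (cmp C h g) f"
  using add_cat unfolding additive_cat_def by (elim conjE)
lemma A7: "\<forall>X \<in> obj C. \<forall>Y \<in> obj C.
        mzero C X Y \<in> hom C X Y \<and>
        (\<forall>f \<in> hom C X Y. \<forall>g \<in> hom C X Y. madd C f g \<in> hom C X Y \<and> madd C f g = madd C g f) \<and>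
        (\<forall>f \<in> hom C X Y. \<forall>g \<in> hom C X Y. \<forall>h \<in> hom C X Y.
           madd C (madd C f g) h = madd C f (madd C g h)) \<and>
        (\<forall>f \<in> hom C X Y. madd C (mzero C X Y) f = f \<and>
           mneg C f \<in> hom C X Y \<and> madd C (mneg C f) f = mzero C X Y)"
  using add_cat unfolding additive_cat_def by (elim conjE)
lemma A8: "\<forall>X \<in> obj C. \<forall>Y \<in> obj C. \<forall>Z \<in> obj C.
        \<forall>f \<in> hom C X Y. \<forall>f' \<in> hom C X Y. \<forall>g \<in> hom C Y Z. \<forall>g' \<in> hom C Y Z.
        cmp C (madd C g g') f = madd C (cmp C g f) (cmp C g' f) \<and>
        cmp C g (madd C f f') = madd C (cmp C g f) (cmp C g f')"
  using add_cat unfolding additive_cat_def by (elim conjE)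
lemma A9: "\<exists>Z. zero_obj C Z"
  using add_cat unfolding additive_cat_def by (elim conjE)

lemma hom_obj: "f \<in> hom C X Y \<Longrightarrow> X \<in> obj C \<and> Y \<in> obj C"
  using A2 by blast
lemma hom_unique: "f \<in> hom C X Y \<Longrightarrow> f \<in> hom C X' Y' \<Longrightarrow> X = X' \<and> Y = Y'"
  using A1 by blast
lemma id_hom[intro]: "X \<in> obj C \<Longrightarrow> ide C X \<in> hom C X X"
  using A3 by blast
lemma comp_hom[intro]: "f \<in> hom C X Y \<Longrightarrow> g \<in> hom C Y Z \<Longrightarrow> cmp C g f \<in> hom C X Z"
  using A4 hom_obj by blast
lemma idr[simp]: "f \<in> hom C X Y \<Longrightarrow> cmp C f (ide C X) = f"
  using A5 hom_obj by blast
lemma idl[simp]: "f \<in> hom C X Y \<Longrightarrow> cmp C (ide C Y) f = f"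
  using A5 hom_obj by blast
lemma assoc: "f \<in> hom C W X \<Longrightarrow> g \<in> hom C X Y \<Longrightarrow> h \<in> hom C Y Z \<Longrightarrow>
   cmp C (cmp C h g) f = cmp C h (cmp C g f)"
  using A6 hom_obj by metis
lemma zero_hom[intro]: "X \<in> obj C \<Longrightarrow> Y \<in> obj C \<Longrightarrow> mzero C X Y \<in> hom C X Y"
  using A7 by blast
lemma add_hom[intro]: "f \<in> hom C X Y \<Longrightarrow> g \<in> hom C X Y \<Longrightarrow> madd C f g \<in> hom C X Y"
  using A7 hom_obj by blast
lemma add_comm: "f \<in> hom C X Y \<Longrightarrow> g \<in> hom C X Y \<Longrightarrow> madd C f g = madd C g f"
  using A7 hom_obj by blast
lemma add_assoc: "f \<in> hom C X Y \<Longrightarrow> g \<in> hom C X Y \<Longrightarrow> h \<in> hom C X Y \<Longrightarrow>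
  madd C (madd C f g) h = madd C f (madd C g h)"
  using A7 hom_obj by blast
lemma zero_add[simp]: "f \<in> hom C X Y \<Longrightarrow> madd C (mzero C X Y) f = f"
  using A7 hom_obj by blast
lemma neg_hom[intro]: "f \<in> hom C X Y \<Longrightarrow> mneg C f \<in> hom C X Y"
  using A7 hom_obj by blast
lemma neg_add[simp]: "f \<in> hom C X Y \<Longrightarrow> madd C (mneg C f) f = mzero C X Y"
  using A7 hom_obj by blast
lemma distl: "f \<in> hom C X Y \<Longrightarrow> g \<in> hom C Y Z \<Longrightarrow> g' \<in> hom C Y Z \<Longrightarrow>
   cmp C (madd C g g') f = madd C (cmp C g f) (cmp C g' f)"
  using A8 hom_obj by blast
lemma distr: "f \<in> hom C X Y \<Longrightarrow> f' \<in> hom C X Y \<Longrightarrow> g \<in> hom C Y Z \<Longrightarrow>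
   cmp C g (madd C f f') = madd C (cmp C g f) (cmp C g f')"
  using A8 hom_obj by blast

lemma add_zero[simp]: "f \<in> hom C X Y \<Longrightarrow> madd C f (mzero C X Y) = f"
  by (metis add_comm hom_obj zero_add zero_hom)
lemma add_neg[simp]: "f \<in> hom C X Y \<Longrightarrow> madd C f (mneg C f) = mzero C X Y"
  by (metis add_comm neg_add neg_hom)

lemma idem_zero: assumes a: "a \<in> hom C X Y" and e: "madd C a a = a" shows "a = mzero C X Y"
proof -
  have na: "mneg C a \<in> hom C X Y" using a by (rule neg_hom)
  have "a = madd C (madd C (mneg C a) a) a" using neg_add[OF a] zero_add[OF a] by simp
  also have "\<dots> = madd C (mneg C a) (madd C a a)" using add_assoc[OF na a a] .
  also have "\<dots> = mzero C X Y" using e neg_add[OF a] by simp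
  finally show ?thesis .
qed

lemma add_left_cancel: assumes a: "a \<in> hom C X Y" and b: "b \<in> hom C X Y" and c: "c \<in> hom C X Y"
  and e: "madd C a b = madd C a c" shows "b = c"
proof -
  have na: "mneg C a \<in> hom C X Y" using a by (rule neg_hom)
  have "b = madd C (madd C (mneg C a) a) b" using neg_add[OF a] zero_add[OF b] by simp
  also have "\<dots> = madd C (mneg C a) (madd C a b)" using add_assoc[OF na a b] .
  also have "\<dots> = madd C (mneg C a) (madd C a c)" using e by simp
  also have "\<dots> = madd C (madd C (mneg C a) a) c" using add_assoc[OF na a c] by simp
  also have "\<dots> = c" using neg_add[OF a] zero_add[OF c] by simp
  finally show ?thesis .
qed

lemma neg_unique: assumes a: "a \<in> hom C X Y" and b: "b \<in> hom C X Y" and e: "madd C a b = mzero C X Y"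
  shows "b = mneg C a"
  using add_left_cancel[OF a b neg_hom[OF a]] e add_neg[OF a] by simp

lemma neg_neg[simp]: assumes a: "a \<in> hom C X Y" shows "mneg C (mneg C a) = a"
  using neg_unique[OF neg_hom[OF a] a] neg_add[OF a] by simp

lemma sub_zero_eq: assumes a: "a \<in> hom C X Y" and b: "b \<in> hom C X Y"
  and e: "madd C a (mneg C b) = mzero C X Y" shows "a = b"
proof -
  have "madd C (mneg C b) a = mzero C X Y" using e add_comm[OF a neg_hom[OF b]] by simp
  then have "a = mneg C (mneg C b)" using neg_unique[OF neg_hom[OF b] a] by blast
  then show ?thesis using b by simp
qed

lemma comp_zero_r[simp]: assumes g: "g \<in> hom C Y Z" and X: "X \<in> obj C" shows "cmp C g (mzero C X Y) = mzero C X Z"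
proof -
  have Y: "Y \<in> obj C" "Z \<in> obj C" using g hom_obj by blast+
  have z: "mzero C X Y \<in> hom C X Y" using X Y by blast
  have "cmp C g (mzero C X Y) = cmp C g (madd C (mzero C X Y) (mzero C X Y))" using zero_add[OF z] by simp
  also have "\<dots> = madd C (cmp C g (mzero C X Y)) (cmp C g (mzero C X Y))"
    using distr[OF z z g] .
  finally show ?thesis using idem_zero[OF comp_hom[OF z g]] by simp
qed

lemma comp_zero_l[simp]: assumes f: "f \<in> hom C X Y" and Z: "Z \<in> obj C" shows "cmp C (mzero C Y Z) f = mzero C X Z"
proof -
  have Y: "Y \<in> obj C" "X \<in> obj C" using f hom_obj by blast+
  have z: "mzero C Y Z \<in> hom C Y Z" using Z Y by blast
  have "cmp C (mzero C Y Z) f = cmp C (madd C (mzero C Y Z) (mzero C Y Z)) f" using zero_add[OF z] by simp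
  also have "\<dots> = madd C (cmp C (mzero C Y Z) f) (cmp C (mzero C Y Z) f)"
    using distl[OF f z z] .
  finally show ?thesis using idem_zero[OF comp_hom[OF f z]] by simp
qed

lemma comp_neg_l: assumes f: "f \<in> hom C X Y" and g: "g \<in> hom C Y Z"
  shows "cmp C (mneg C g) f = mneg C (cmp C g f)"
proof -
  have o: "X \<in> obj C" "Z \<in> obj C" using f g hom_obj by blast+
  have "madd C (cmp C g f) (cmp C (mneg C g) f) = cmp C (madd C g (mneg C g)) f"
    using distl[OF f g neg_hom[OF g]] by simp
  also have "\<dots> = mzero C X Z" using add_neg[OF g] comp_zero_l[OF f o(2)] by simp
  finally show ?thesis using neg_unique[OF comp_hom[OF f g] comp_hom[OF f neg_hom[OF g]]] by blast
qed

lemma comp_neg_r: assumes f: "f \<in> hom C X Y" and g: "g \<in> hom C Y Z"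
  shows "cmp C g (mneg C f) = mneg C (cmp C g f)"
proof -
  have o: "X \<in> obj C" "Z \<in> obj C" using f g hom_obj by blast+
  have "madd C (cmp C g f) (cmp C g (mneg C f)) = cmp C g (madd C f (mneg C f))"
    using distr[OF f neg_hom[OF f] g] by simp
  also have "\<dots> = mzero C X Z" using add_neg[OF f] comp_zero_r[OF g o(1)] by simp
  finally show ?thesis using neg_unique[OF comp_hom[OF f g] comp_hom[OF neg_hom[OF f] g]] by blast
qed

lemma neg_zero[simp]: assumes "X \<in> obj C" "Y \<in> obj C" shows "mneg C (mzero C X Y) = mzero C X Y"
proof -
  have z: "mzero C X Y \<in> hom C X Y" using assms by blast
  show ?thesis using neg_unique[OF z z] zero_add[OF z] by simp
qed

lemma neg_inj: "a \<in> hom C X Y \<Longrightarrow> b \<in> hom C X Y \<Longrightarrow> mneg C a = mneg C b \<Longrightarrow> a = b"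
  by (metis neg_neg)

lemma neg_eq_zero: assumes a: "a \<in> hom C X Y" shows "mneg C a = mzero C X Y \<longleftrightarrow> a = mzero C X Y"
proof -
  have o: "X \<in> obj C" "Y \<in> obj C" using a hom_obj by blast+
  show ?thesis using neg_neg[OF a] neg_zero[OF o] by metis
qed

lemma S1: "\<forall>X \<in> obj C. sh C X \<in> obj C"
  using shift_eq unfolding shift_equiv_def by (elim conjE)
lemma S2: "\<forall>X \<in> obj C. \<forall>Y \<in> obj C. bij_betw (shm C) (hom C X Y) (hom C (sh C X) (sh C Y))"
  using shift_eq unfolding shift_equiv_def by (elim conjE)
lemma S3: "\<forall>X \<in> obj C. shm C (ide C X) = ide C (sh C X)"
  using shift_eq unfolding shift_equiv_def by (elim conjE)
lemma S4: "\<forall>X \<in> obj C. \<forall>Y \<in> obj C. \<forall>Z \<in> obj C. \<forall>f \<in> hom C X Y. \<forall>g \<in> hom C Y Z.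
        shm C (cmp C g f) = cmp C (shm C g) (shm C f)"
  using shift_eq unfolding shift_equiv_def by (elim conjE)
lemma S5: "\<forall>X \<in> obj C. \<forall>Y \<in> obj C. \<forall>f \<in> hom C X Y. \<forall>g \<in> hom C X Y.
        shm C (madd C f g) = madd C (shm C f) (shm C g)"
  using shift_eq unfolding shift_equiv_def by (elim conjE)
lemma S6: "\<forall>Y \<in> obj C. \<exists>X \<in> obj C. isomorphic C (sh C X) Y"
  using shift_eq unfolding shift_equiv_def by (elim conjE)

lemma sh_obj[intro]: "X \<in> obj C \<Longrightarrow> sh C X \<in> obj C" using S1 by blast
lemma shm_bij: "f \<in> hom C X Y \<Longrightarrow> bij_betw (shm C) (hom C X Y) (hom C (sh C X) (sh C Y))"
proof -
  assume f: "f \<in> hom C X Y"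
  then have "X \<in> obj C" "Y \<in> obj C" using hom_obj by blast+
  then show ?thesis using S2 by blast
qed
lemma shm_hom[intro]: "f \<in> hom C X Y \<Longrightarrow> shm C f \<in> hom C (sh C X) (sh C Y)"
  using bij_betw_apply[OF shm_bij] by blast
lemma shm_inj: assumes f: "f \<in> hom C X Y" and g: "g \<in> hom C X Y" and e: "shm C f = shm C g" shows "f = g"
  using inj_onD[OF bij_betw_imp_inj_on[OF shm_bij[OF f]] e f g] .
lemma shm_surj: assumes X: "X \<in> obj C" and Y: "Y \<in> obj C" and g: "g \<in> hom C (sh C X) (sh C Y)"
  shows "\<exists>f \<in> hom C X Y. g = shm C f"
proof -
  have b: "bij_betw (shm C) (hom C X Y) (hom C (sh C X) (sh C Y))" using S2 X Y by blast
  then have "g \<in> shm C ` hom C X Y" using bij_betw_imp_surj_on[OF b] g by simp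
  then show ?thesis by blast
qed
lemma shm_id[simp]: "X \<in> obj C \<Longrightarrow> shm C (ide C X) = ide C (sh C X)" using S3 by blast
lemma shm_comp: "f \<in> hom C X Y \<Longrightarrow> g \<in> hom C Y Z \<Longrightarrow> shm C (cmp C g f) = cmp C (shm C g) (shm C f)"
  using S4 hom_obj by blast
lemma shm_add: "f \<in> hom C X Y \<Longrightarrow> g \<in> hom C X Y \<Longrightarrow> shm C (madd C f g) = madd C (shm C f) (shm C g)"
  using S5 hom_obj by blast
lemma shm_zero[simp]: assumes "X \<in> obj C" "Y \<in> obj C" shows "shm C (mzero C X Y) = mzero C (sh C X) (sh C Y)"
proof -
  have "shm C (mzero C X Y) = madd C (shm C (mzero C X Y)) (shm C (mzero C X Y))"
    using shm_add[of "mzero C X Y" X Y "mzero C X Y"] assms by auto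
  then show ?thesis using idem_zero[of "shm C (mzero C X Y)"] assms by (metis shm_hom zero_hom)
qed
lemma shm_neg: assumes "f \<in> hom C X Y" shows "shm C (mneg C f) = mneg C (shm C f)"
proof -
  have o: "X \<in> obj C" "Y \<in> obj C" using assms hom_obj by blast+
  have "madd C (shm C f) (shm C (mneg C f)) = shm C (madd C f (mneg C f))"
    using shm_add assms neg_hom by metis
  also have "\<dots> = mzero C (sh C X) (sh C Y)" using assms o by simp
  finally show ?thesis using neg_unique assms by (metis shm_hom neg_hom)
qed

lemma D0: "\<forall>t \<in> dist C. is_triangle C t"
  using tri unfolding triangulated_def by (elim conjE)
lemma D1: "\<forall>t \<in> dist C. \<forall>t'. is_triangle C t' \<longrightarrow> tri_iso C t t' \<longrightarrow> t' \<in> dist C"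
  using tri unfolding triangulated_def by (elim conjE)
lemma D2: "\<forall>X \<in> obj C. \<forall>Z. zero_obj C Z \<longrightarrow>
        (X, X, Z, ide C X, mzero C X Z, mzero C Z (sh C X)) \<in> dist C"
  using tri unfolding triangulated_def by (elim conjE)
lemma D3: "\<forall>X \<in> obj C. \<forall>Y \<in> obj C. \<forall>f \<in> hom C X Y. \<exists>Z g h. (X, Y, Z, f, g, h) \<in> dist C"
  using tri unfolding triangulated_def by (elim conjE)
lemma D4: "\<forall>X Y Z f g h. is_triangle C (X, Y, Z, f, g, h) \<longrightarrow>
        ((X, Y, Z, f, g, h) \<in> dist C \<longleftrightarrow>
         (Y, Z, sh C X, g, h, mneg C (shm C f)) \<in> dist C)"
  using tri unfolding triangulated_def by (elim conjE)
lemma D5: "\<forall>X Y Z f g h X' Y' Z' f' g' h' u v.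
        (X, Y, Z, f, g, h) \<in> dist C \<longrightarrow> (X', Y', Z', f', g', h') \<in> dist C \<longrightarrow>
        u \<in> hom C X X' \<longrightarrow> v \<in> hom C Y Y' \<longrightarrow> cmp C v f = cmp C f' u \<longrightarrow>
        (\<exists>w \<in> hom C Z Z'. cmp C w g = cmp C g' v \<and> cmp C (shm C u) h = cmp C h' w)"
  using tri unfolding triangulated_def by (elim conjE)
lemma D6: "\<forall>X Y Z Z' X' Y' f g i i' j j' k k'.
        (X, Y, Z', f, i, i') \<in> dist C \<longrightarrow> (Y, Z, X', g, j, j') \<in> dist C \<longrightarrow>
        (X, Z, Y', cmp C g f, k, k') \<in> dist C \<longrightarrow>
        (\<exists>l m. (Z', Y', X', l, m, cmp C (shm C i) j') \<in> dist C \<and>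
           cmp C l i = cmp C k g \<and> cmp C k' l = i' \<and>
           cmp C m k = j \<and> cmp C j' m = cmp C (shm C f) k')"
  using tri unfolding triangulated_def by (elim conjE)

lemma dist_tri: "(A, B, Z, f, g, h) \<in> dist C \<Longrightarrow>
   A \<in> obj C \<and> B \<in> obj C \<and> Z \<in> obj C \<and> f \<in> hom C A B \<and> g \<in> hom C B Z \<and> h \<in> hom C Z (sh C A)"
  using D0 unfolding is_triangle_def by fastforce

lemma rot: "(A, B, Z, f, g, h) \<in> dist C \<Longrightarrow> (B, Z, sh C A, g, h, mneg C (shm C f)) \<in> dist C"
  using D0 D4 by blast

lemma rot3: "(A, B, Z, f, g, h) \<in> dist C \<Longrightarrow>
  (sh C A, sh C B, sh C Z, mneg C (shm C f), mneg C (shm C g), mneg C (shm C h)) \<in> dist C"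
  using rot by blast

lemma zero_objD: "zero_obj C Z \<Longrightarrow> Z \<in> obj C"
  "zero_obj C Z \<Longrightarrow> X \<in> obj C \<Longrightarrow> hom C Z X = {mzero C Z X}"
  "zero_obj C Z \<Longrightarrow> X \<in> obj C \<Longrightarrow> hom C X Z = {mzero C X Z}"
  unfolding zero_obj_def by blast+

lemma tr3: "(A, B, Z, f, g, h) \<in> dist C \<Longrightarrow> (A', B', Z', f', g', h') \<in> dist C \<Longrightarrow>
        u \<in> hom C A A' \<Longrightarrow> v \<in> hom C B B' \<Longrightarrow> cmp C v f = cmp C f' u \<Longrightarrow>
        (\<exists>w \<in> hom C Z Z'. cmp C w g = cmp C g' v \<and> cmp C (shm C u) h = cmp C h' w)"
  using D5 by blast

lemma comp_zero_tri: assumes "(A, B, Z, f, g, h) \<in> dist C" shows "cmp C g f = mzero C A Z"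
proof -
  obtain Z0 where z: "zero_obj C Z0" using A9 by blast
  have t: "A \<in> obj C" "f \<in> hom C A B" "Z \<in> obj C" using dist_tri[OF assms] by blast+
  have "(A, A, Z0, ide C A, mzero C A Z0, mzero C Z0 (sh C A)) \<in> dist C" using D2 z t by blast
  from tr3[OF this assms, of "ide C A" f] t obtain w where
    "w \<in> hom C Z0 Z" "cmp C w (mzero C A Z0) = cmp C g f" by auto
  then show ?thesis using t by simp
qed

end


context TC begin

declare sh_obj[simp] zero_hom[simp] id_hom[simp]

lemma iso_zero: assumes z: "zero_obj C Z" and i: "iso_mor C Y Z p" shows "zero_obj C Y"
proof -
  obtain q where q: "q \<in> hom C Z Y" "cmp C q p = ide C Y" "cmp C p q = ide C Z" and p: "p \<in> hom C Y Z"
    using i unfolding iso_mor_def by blast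
  have oY: "Y \<in> obj C" "Z \<in> obj C" using p hom_obj by blast+
  have h1: "hom C Y X = {mzero C Y X}" if X: "X \<in> obj C" for X
  proof
    show "{mzero C Y X} \<subseteq> hom C Y X" using X oY by blast
    show "hom C Y X \<subseteq> {mzero C Y X}"
    proof
      fix f assume f: "f \<in> hom C Y X"
      have fq: "cmp C f q \<in> hom C Z X" using q f by blast
      then have fq0: "cmp C f q = mzero C Z X" using zero_objD(2)[OF z X] by blast
      have "f = cmp C f (cmp C q p)" using q f by simp
      also have "\<dots> = cmp C (cmp C f q) p" using assoc[OF p q(1) f] by simp
      also have "\<dots> = mzero C Y X" using fq0 comp_zero_l[OF p X] by simp
      finally show "f \<in> {mzero C Y X}" by simp
    qed
  qed
  have h2: "hom C X Y = {mzero C X Y}" if X: "X \<in> obj C" for X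
  proof
    show "{mzero C X Y} \<subseteq> hom C X Y" using X oY by blast
    show "hom C X Y \<subseteq> {mzero C X Y}"
    proof
      fix f assume f: "f \<in> hom C X Y"
      have fq: "cmp C p f \<in> hom C X Z" using p f by blast
      then have fq0: "cmp C p f = mzero C X Z" using zero_objD(3)[OF z X] by blast
      have "f = cmp C (cmp C q p) f" using q f by simp
      also have "\<dots> = cmp C q (cmp C p f)" using assoc[OF f p q(1)] by simp
      also have "\<dots> = mzero C X Y" using fq0 comp_zero_r[OF q(1) X] by simp
      finally show "f \<in> {mzero C X Y}" by simp
    qed
  qed
  show ?thesis unfolding zero_obj_def using oY h1 h2 by blast
qed

lemma zero_tri_back: assumes W: "W \<in> obj C"
  shows "\<exists>Z'. Z' \<in> obj C \<and> (Z', W, W, mzero C Z' W, ide C W, mzero C W (sh C Z')) \<in> dist C"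
proof -
  obtain Z where z: "zero_obj C Z" using A9 by blast
  have Zo: "Z \<in> obj C" using zero_objD(1)[OF z] .
  obtain Z' where Z': "Z' \<in> obj C" "isomorphic C (sh C Z') Z" using S6 Zo by blast
  then obtain p where "iso_mor C (sh C Z') Z p" unfolding isomorphic_def by blast
  then have z': "zero_obj C (sh C Z')" using iso_zero z by blast
  have d: "(W, W, sh C Z', ide C W, mzero C W (sh C Z'), mzero C (sh C Z') (sh C W)) \<in> dist C"
    using D2 W z' by blast
  have it: "is_triangle C (Z', W, W, mzero C Z' W, ide C W, mzero C W (sh C Z'))"
    unfolding is_triangle_def using Z' W by auto
  have "mneg C (shm C (mzero C Z' W)) = mzero C (sh C Z') (sh C W)"
    using Z' W sh_obj by simp
  then have "(Z', W, W, mzero C Z' W, ide C W, mzero C W (sh C Z')) \<in> dist C"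
    using D4 it d by metis
  then show ?thesis using Z' by blast
qed

lemma exact_cov: assumes d: "(A, B, Z, f, g, h) \<in> dist C" and psi: "psi \<in> hom C W B"
  and e: "cmp C g psi = mzero C W Z" shows "\<exists>chi \<in> hom C W A. psi = cmp C f chi"
proof -
  obtain Z0 where z: "zero_obj C Z0" using A9 by blast
  have Z0: "Z0 \<in> obj C" using zero_objD(1)[OF z] .
  have t: "A \<in> obj C" "B \<in> obj C" "Z \<in> obj C" "f \<in> hom C A B" "g \<in> hom C B Z" "h \<in> hom C Z (sh C A)"
    using dist_tri[OF d] by blast+
  have Wo: "W \<in> obj C" using psi hom_obj by blast
  have "(W, W, Z0, ide C W, mzero C W Z0, mzero C Z0 (sh C W)) \<in> dist C" using D2 z Wo by blast
  then have r1: "(W, Z0, sh C W, mzero C W Z0, mzero C Z0 (sh C W), mneg C (shm C (ide C W))) \<in> dist C"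
    by (rule rot)
  have r2: "(B, Z, sh C A, g, h, mneg C (shm C f)) \<in> dist C" using rot[OF d] .
  have v: "mzero C Z0 Z \<in> hom C Z0 Z" using Z0 t by blast
  have eq: "cmp C (mzero C Z0 Z) (mzero C W Z0) = cmp C g psi" using e Wo v by simp
  obtain w where w: "w \<in> hom C (sh C W) (sh C A)"
    "cmp C (shm C psi) (mneg C (shm C (ide C W))) = cmp C (mneg C (shm C f)) w"
    using tr3[OF r1 r2 psi v eq] by blast
  have sp: "shm C psi \<in> hom C (sh C W) (sh C B)" using psi by blast
  have sf: "shm C f \<in> hom C (sh C A) (sh C B)" using t by blast
  have "mneg C (shm C psi) = mneg C (cmp C (shm C f) w)"
    using w(2) comp_neg_r[OF id_hom[OF sh_obj[OF Wo]] sp] comp_neg_l[OF w(1) sf] sp Wo by simp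
  then have "shm C psi = cmp C (shm C f) w" using neg_inj sp comp_hom[OF w(1) sf] by blast
  moreover obtain chi where chi: "chi \<in> hom C W A" "w = shm C chi" using shm_surj[OF Wo t(1) w(1)] by blast
  ultimately have "shm C psi = shm C (cmp C f chi)" using shm_comp[OF chi(1) t(4)] by simp
  then have "psi = cmp C f chi" using shm_inj psi comp_hom[OF chi(1) t(4)] by blast
  then show ?thesis using chi by blast
qed

lemma exact_contra: assumes d: "(A, B, Z, f, g, h) \<in> dist C" and phi: "phi \<in> hom C B W"
  and e: "cmp C phi f = mzero C A W" shows "\<exists>chi \<in> hom C Z W. phi = cmp C chi g"
proof -
  have t: "A \<in> obj C" "B \<in> obj C" "Z \<in> obj C" "f \<in> hom C A B" "g \<in> hom C B Z" "h \<in> hom C Z (sh C A)"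
    using dist_tri[OF d] by blast+
  have Wo: "W \<in> obj C" using phi hom_obj by blast
  obtain Z' where Z': "Z' \<in> obj C" "(Z', W, W, mzero C Z' W, ide C W, mzero C W (sh C Z')) \<in> dist C"
    using zero_tri_back[OF Wo] by blast
  have u: "mzero C A Z' \<in> hom C A Z'" using t Z' by blast
  have eq: "cmp C phi f = cmp C (mzero C Z' W) (mzero C A Z')" using e t Wo u by simp
  obtain w where "w \<in> hom C Z W" "cmp C w g = cmp C (ide C W) phi"
    using tr3[OF d Z'(2) u phi eq] by blast
  then show ?thesis using phi by auto
qed

lemma exz: assumes d: "(A, B, Z, f, g, h) \<in> dist C" and z: "hom C W A = {mzero C W A}"
  and psi: "psi \<in> hom C W B" and e: "cmp C g psi = mzero C W Z" shows "psi = mzero C W B"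
proof -
  obtain chi where chi: "chi \<in> hom C W A" "psi = cmp C f chi" using exact_cov[OF d psi e] by blast
  have t: "f \<in> hom C A B" "B \<in> obj C" using dist_tri[OF d] by blast+
  have W: "W \<in> obj C" using psi hom_obj by blast
  show ?thesis using chi z comp_zero_r[OF t(1) W] by simp
qed

lemma epi_h0: assumes d: "(A, B, Z, f, g, mzero C Z (sh C A)) \<in> dist C"
  and p1: "p1 \<in> hom C Z W" and p2: "p2 \<in> hom C Z W" and e: "cmp C p1 g = cmp C p2 g"
  shows "p1 = p2"
proof -
  have t: "A \<in> obj C" "B \<in> obj C" "Z \<in> obj C" "f \<in> hom C A B" "g \<in> hom C B Z"
    using dist_tri[OF d] by blast+
  have W: "W \<in> obj C" using p1 hom_obj by blast
  have dd: "madd C p1 (mneg C p2) \<in> hom C Z W" using p1 p2 by blast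
  have "cmp C (madd C p1 (mneg C p2)) g = madd C (cmp C p1 g) (mneg C (cmp C p2 g))"
    using distl[OF t(5) p1 neg_hom[OF p2]] comp_neg_l[OF t(5) p2] by simp
  also have "\<dots> = mzero C B W" using e add_neg[OF comp_hom[OF t(5) p2]] by simp
  finally have "cmp C (madd C p1 (mneg C p2)) g = mzero C B W" .
  then obtain chi where chi: "chi \<in> hom C (sh C A) W"
     "madd C p1 (mneg C p2) = cmp C chi (mzero C Z (sh C A))"
    using exact_contra[OF rot[OF d] dd] by blast
  then have "madd C p1 (mneg C p2) = mzero C Z W" using comp_zero_l[OF _ W] t sh_obj by simp
  then show ?thesis using sub_zero_eq p1 p2 by blast
qed

lemma split: assumes d: "(A, B, Z, f, g, mzero C Z (sh C A)) \<in> dist C"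
  shows "\<exists>q r. is_biprod C A Z B f q r g"
proof -
  have t: "A \<in> obj C" "B \<in> obj C" "Z \<in> obj C" "f \<in> hom C A B" "g \<in> hom C B Z"
    using dist_tri[OF d] by blast+
  have sA: "sh C A \<in> obj C" using t by blast
  have d2: "(Z, sh C A, sh C B, mzero C Z (sh C A), mneg C (shm C f), mneg C (shm C g)) \<in> dist C"
    using rot[OF rot[OF d]] .
  have "cmp C (ide C (sh C A)) (mzero C Z (sh C A)) = mzero C Z (sh C A)"
    using idl[OF zero_hom[OF t(3) sA]] .
  then obtain chi where chi: "chi \<in> hom C (sh C B) (sh C A)"
    "ide C (sh C A) = cmp C chi (mneg C (shm C f))"
    using exact_contra[OF d2 id_hom[OF sA]] by blast
  obtain r' where r': "r' \<in> hom C B A" "chi = shm C r'" using shm_surj[OF t(2) t(1) chi(1)] by blast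
  have rf: "cmp C r' f \<in> hom C A A" using r' t by blast
  have "shm C (ide C A) = shm C (mneg C (cmp C r' f))"
    using chi(2) r' comp_neg_r[OF shm_hom[OF t(4)] shm_hom[OF r'(1)]] shm_comp[OF t(4) r'(1)]
      shm_neg[OF rf] t by simp
  then have "ide C A = mneg C (cmp C r' f)" using shm_inj id_hom[OF t(1)] neg_hom[OF rf] by blast
  define r where "r = mneg C r'"
  have r: "r \<in> hom C B A" using r' r_def by blast
  have rf1: "cmp C r f = ide C A" using r_def comp_neg_l[OF t(4) r'(1)] \<open>ide C A = _\<close> by simp
  have fr: "cmp C f r \<in> hom C B B" using r t by blast
  define e where "e = madd C (ide C B) (mneg C (cmp C f r))"
  have eh: "e \<in> hom C B B" using e_def fr t by blast
  have "cmp C e f = madd C (cmp C (ide C B) f) (cmp C (mneg C (cmp C f r)) f)"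
    using e_def distl[OF t(4) id_hom[OF t(2)] neg_hom[OF fr]] by simp
  also have "\<dots> = madd C f (mneg C (cmp C (cmp C f r) f))" using comp_neg_l[OF t(4) fr] t by simp
  also have "cmp C (cmp C f r) f = f" using assoc[OF t(4) r t(4)] rf1 t by simp
  finally have ef: "cmp C e f = mzero C A B" using add_neg[OF t(4)] by simp
  obtain q where q: "q \<in> hom C Z B" "e = cmp C q g" using exact_contra[OF d eh ef] by blast
  have gf: "cmp C g f = mzero C A Z" using comp_zero_tri[OF d] .
  have ge: "cmp C g e = g"
  proof -
    have "cmp C g e = madd C (cmp C g (ide C B)) (cmp C g (mneg C (cmp C f r)))"
      using e_def distr[OF id_hom[OF t(2)] neg_hom[OF fr] t(5)] by simp
    also have "\<dots> = madd C g (mneg C (cmp C (cmp C g f) r))"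
      using comp_neg_r[OF fr t(5)] assoc[OF r t(4) t(5)] t by simp
    also have "\<dots> = g" using gf comp_zero_l[OF r t(3)] t by simp
    finally show ?thesis .
  qed
  have re: "cmp C r e = mzero C B A"
  proof -
    have "cmp C r e = madd C (cmp C r (ide C B)) (cmp C r (mneg C (cmp C f r)))"
      using e_def distr[OF id_hom[OF t(2)] neg_hom[OF fr] r] by simp
    also have "\<dots> = madd C r (mneg C (cmp C (cmp C r f) r))"
      using comp_neg_r[OF fr r] assoc[OF r t(4) r] r by simp
    also have "\<dots> = mzero C B A" using rf1 r by simp
    finally show ?thesis .
  qed
  have gq: "cmp C g q = ide C Z"
  proof (rule epi_h0[OF d])
    show "cmp C g q \<in> hom C Z Z" using q t by blast
    show "ide C Z \<in> hom C Z Z" using t by blast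
    show "cmp C (cmp C g q) g = cmp C (ide C Z) g" using assoc[OF t(5) q(1) t(5)] q ge t by simp
  qed
  have rq: "cmp C r q = mzero C Z A"
  proof (rule epi_h0[OF d])
    show "cmp C r q \<in> hom C Z A" using q r by blast
    show "mzero C Z A \<in> hom C Z A" using t by blast
    show "cmp C (cmp C r q) g = cmp C (mzero C Z A) g" using assoc[OF t(5) q(1) r] q re t by simp
  qed
  have sum: "madd C (cmp C f r) (cmp C q g) = ide C B"
  proof -
    have "madd C (cmp C f r) (cmp C q g) = madd C (cmp C f r) (madd C (mneg C (cmp C f r)) (ide C B))"
      using q e_def add_comm[OF id_hom[OF t(2)] neg_hom[OF fr]] by simp
    also have "\<dots> = madd C (madd C (cmp C f r) (mneg C (cmp C f r))) (ide C B)"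
      using add_assoc[OF fr neg_hom[OF fr] id_hom[OF t(2)]] by simp
    also have "\<dots> = ide C B" using fr t by simp
    finally show ?thesis .
  qed
  have "is_biprod C A Z B f q r g"
    unfolding is_biprod_def using t q r rf1 gq gf rq sum by blast
  then show ?thesis by blast
qed

end


context TC begin

lemma id_id[simp]: "X \<in> obj C \<Longrightarrow> cmp C (ide C X) (ide C X) = ide C X"
  using idl[OF id_hom] by blast

lemma iso_id: assumes "X \<in> obj C" shows "iso_mor C X X (ide C X)"
  unfolding iso_mor_def using assms by auto

lemma biprod_iso: assumes b: "is_biprod C X Y P i1 i2 p1 p2" and i: "iso_mor C P P' u"
  shows "\<exists>j1 j2 q1 q2. is_biprod C X Y P' j1 j2 q1 q2"
proof -
  obtain v where v: "v \<in> hom C P' P" "cmp C v u = ide C P" "cmp C u v = ide C P'" and u: "u \<in> hom C P P'"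
    using i unfolding iso_mor_def by blast
  have bb: "P \<in> obj C" "i1 \<in> hom C X P" "i2 \<in> hom C Y P" "p1 \<in> hom C P X" "p2 \<in> hom C P Y"
     "cmp C p1 i1 = ide C X" "cmp C p2 i2 = ide C Y"
     "cmp C p2 i1 = mzero C X Y" "cmp C p1 i2 = mzero C Y X"
     "madd C (cmp C i1 p1) (cmp C i2 p2) = ide C P" using b unfolding is_biprod_def by blast+
  have P': "P' \<in> obj C" using u hom_obj by blast
  have e1: "cmp C (cmp C p1 v) (cmp C u i1) = cmp C p1 i1"
    using assoc[OF bb(2) u v(1)] assoc[OF _ v(1) bb(4), of "cmp C u i1" X] bb u v by auto
  have e2: "cmp C (cmp C p2 v) (cmp C u i2) = cmp C p2 i2"
    using assoc[OF bb(3) u v(1)] assoc[OF _ v(1) bb(5), of "cmp C u i2" Y] bb u v by auto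
  have e3: "cmp C (cmp C p2 v) (cmp C u i1) = cmp C p2 i1"
    using assoc[OF bb(2) u v(1)] assoc[OF _ v(1) bb(5), of "cmp C u i1" X] bb u v by auto
  have e4: "cmp C (cmp C p1 v) (cmp C u i2) = cmp C p1 i2"
    using assoc[OF bb(3) u v(1)] assoc[OF _ v(1) bb(4), of "cmp C u i2" Y] bb u v by auto
  have a1: "cmp C (cmp C u i1) (cmp C p1 v) = cmp C u (cmp C (cmp C i1 p1) v)"
    using assoc[OF comp_hom[OF v(1) bb(4)] bb(2) u] assoc[OF v(1) bb(4) bb(2)] by simp
  have a2: "cmp C (cmp C u i2) (cmp C p2 v) = cmp C u (cmp C (cmp C i2 p2) v)"
    using assoc[OF comp_hom[OF v(1) bb(5)] bb(3) u] assoc[OF v(1) bb(5) bb(3)] by simp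
  have ip1: "cmp C i1 p1 \<in> hom C P P" "cmp C i2 p2 \<in> hom C P P" using bb by blast+
  have "madd C (cmp C (cmp C u i1) (cmp C p1 v)) (cmp C (cmp C u i2) (cmp C p2 v))
      = cmp C u (madd C (cmp C (cmp C i1 p1) v) (cmp C (cmp C i2 p2) v))"
    using a1 a2 distr[OF comp_hom[OF v(1) ip1(1)] comp_hom[OF v(1) ip1(2)] u] by simp
  also have "\<dots> = cmp C u (cmp C (madd C (cmp C i1 p1) (cmp C i2 p2)) v)"
    using distl[OF v(1) ip1] by simp
  also have "\<dots> = ide C P'" using bb(10) v u by simp
  finally have e5: "madd C (cmp C (cmp C u i1) (cmp C p1 v)) (cmp C (cmp C u i2) (cmp C p2 v)) = ide C P'" .
  have "is_biprod C X Y P' (cmp C u i1) (cmp C u i2) (cmp C p1 v) (cmp C p2 v)"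
    unfolding is_biprod_def using P' e1 e2 e3 e4 e5 bb u v by (intro conjI) auto
  then show ?thesis by blast
qed

lemma biprod_unshift: assumes b: "is_biprod C (sh C X) (sh C Y) (sh C P) i1 i2 p1 p2"
  and o: "X \<in> obj C" "Y \<in> obj C" "P \<in> obj C"
  shows "\<exists>j1 j2 q1 q2. is_biprod C X Y P j1 j2 q1 q2"
proof -
  have bb: "i1 \<in> hom C (sh C X) (sh C P)" "i2 \<in> hom C (sh C Y) (sh C P)"
     "p1 \<in> hom C (sh C P) (sh C X)" "p2 \<in> hom C (sh C P) (sh C Y)"
     "cmp C p1 i1 = ide C (sh C X)" "cmp C p2 i2 = ide C (sh C Y)"
     "cmp C p2 i1 = mzero C (sh C X) (sh C Y)" "cmp C p1 i2 = mzero C (sh C Y) (sh C X)"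
     "madd C (cmp C i1 p1) (cmp C i2 p2) = ide C (sh C P)" using b unfolding is_biprod_def by blast+
  obtain j1 where j1: "j1 \<in> hom C X P" "i1 = shm C j1" using shm_surj o bb(1) by blast
  obtain j2 where j2: "j2 \<in> hom C Y P" "i2 = shm C j2" using shm_surj o bb(2) by blast
  obtain q1 where q1: "q1 \<in> hom C P X" "p1 = shm C q1" using shm_surj o bb(3) by blast
  obtain q2 where q2: "q2 \<in> hom C P Y" "p2 = shm C q2" using shm_surj o bb(4) by blast
  have c1: "cmp C q1 j1 = ide C X"
    using shm_inj[OF comp_hom[OF j1(1) q1(1)] id_hom[OF o(1)]] shm_comp[OF j1(1) q1(1)] bb(5) j1 q1 o by simp
  have c2: "cmp C q2 j2 = ide C Y"
    using shm_inj[OF comp_hom[OF j2(1) q2(1)] id_hom[OF o(2)]] shm_comp[OF j2(1) q2(1)] bb(6) j2 q2 o by simp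
  have c3: "cmp C q2 j1 = mzero C X Y"
    using shm_inj[OF comp_hom[OF j1(1) q2(1)] zero_hom[OF o(1) o(2)]] shm_comp[OF j1(1) q2(1)] bb(7) j1 q2 o by simp
  have c4: "cmp C q1 j2 = mzero C Y X"
    using shm_inj[OF comp_hom[OF j2(1) q1(1)] zero_hom[OF o(2) o(1)]] shm_comp[OF j2(1) q1(1)] bb(8) j2 q1 o by simp
  have h1: "cmp C j1 q1 \<in> hom C P P" "cmp C j2 q2 \<in> hom C P P" using j1 j2 q1 q2 by blast+
  have "shm C (madd C (cmp C j1 q1) (cmp C j2 q2)) = shm C (ide C P)"
    using shm_add[OF h1] shm_comp[OF q1(1) j1(1)] shm_comp[OF q2(1) j2(1)] bb(9) j1 j2 q1 q2 o by simp
  then have c5: "madd C (cmp C j1 q1) (cmp C j2 q2) = ide C P"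
    using shm_inj[OF add_hom[OF h1] id_hom[OF o(3)]] by blast
  have "is_biprod C X Y P j1 j2 q1 q2" unfolding is_biprod_def
    using o j1 j2 q1 q2 c1 c2 c3 c4 c5 by blast
  then show ?thesis by blast
qed

lemma perp: assumes cp: "cotorsion_pair C A B" and Y: "Y \<in> obj C"
  and z: "\<And>S'. S' \<in> A \<Longrightarrow> hom C S' (sh C Y) = {mzero C S' (sh C Y)}"
  shows "Y \<in> B"
proof -
  have sY: "sh C Y \<in> obj C" using Y by simp
  have "obj C = star C A (shift_up C B)" using cp unfolding cotorsion_pair_def by blast
  then obtain S'' Z f g h where S'': "S'' \<in> A" and Z: "Z \<in> shift_up C B"
     and d: "(S'', sh C Y, Z, f, g, h) \<in> dist C"
    using sY unfolding star_def by blast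
  have t: "S'' \<in> obj C" "f \<in> hom C S'' (sh C Y)" "Z \<in> obj C" using dist_tri[OF d] by blast+
  have f0: "f = mzero C S'' (sh C Y)" using z[OF S''] t by blast
  have d2: "(sh C Y, Z, sh C S'', g, h, mneg C (shm C f)) \<in> dist C" using rot[OF d] .
  have "mneg C (shm C f) = mzero C (sh C S'') (sh C (sh C Y))" using f0 t Y by simp
  then have d3: "(sh C Y, Z, sh C S'', g, h, mzero C (sh C S'') (sh C (sh C Y))) \<in> dist C"
    using d2 by simp
  obtain q r where bp: "is_biprod C (sh C Y) (sh C S'') Z g q r h" using split[OF d3] by blast
  obtain T'' where T'': "T'' \<in> B" "isomorphic C Z (sh C T'')" using Z unfolding shift_up_def by blast
  obtain u where "iso_mor C Z (sh C T'') u" using T'' unfolding isomorphic_def by blast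
  then obtain j1 j2 q1 q2 where "is_biprod C (sh C Y) (sh C S'') (sh C T'') j1 j2 q1 q2"
    using biprod_iso[OF bp] by blast
  moreover have "T'' \<in> obj C" using T'' cp unfolding cotorsion_pair_def subcat_def by blast
  ultimately obtain k1 k2 l1 l2 where "is_biprod C Y S'' T'' k1 k2 l1 l2"
    using biprod_unshift Y t by blast
  then show ?thesis using T'' cp unfolding cotorsion_pair_def subcat_def by blast
qed

lemma nilp_inv: assumes d: "d \<in> hom C Z Z" and dd: "cmp C d d = mzero C Z Z"
  shows "cmp C (madd C d (ide C Z)) (madd C (ide C Z) (mneg C d)) = ide C Z"
    and "cmp C (madd C (ide C Z) (mneg C d)) (madd C d (ide C Z)) = ide C Z"
proof -
  have Z: "Z \<in> obj C" using d hom_obj by blast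
  have i: "ide C Z \<in> hom C Z Z" using Z by simp
  have nd: "mneg C d \<in> hom C Z Z" using d by blast
  have ndd: "cmp C d (mneg C d) = mzero C Z Z" "cmp C (mneg C d) d = mzero C Z Z"
    using comp_neg_r[OF d d] comp_neg_l[OF d d] dd Z by simp_all
  have "cmp C (madd C d (ide C Z)) (madd C (ide C Z) (mneg C d))
     = madd C (cmp C d (madd C (ide C Z) (mneg C d))) (cmp C (ide C Z) (madd C (ide C Z) (mneg C d)))"
    using distl[OF add_hom[OF i nd] d i] .
  also have "\<dots> = madd C (madd C d (mzero C Z Z)) (madd C (ide C Z) (mneg C d))"
    using distr[OF i nd d] ndd d nd idl[OF add_hom[OF i nd]] by simp
  also have "\<dots> = madd C d (madd C (ide C Z) (mneg C d))" using d by simp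
  also have "\<dots> = ide C Z"
    using add_comm[OF i nd] add_assoc[OF d nd i] add_neg[OF d] zero_add[OF i] by simp
  finally show "cmp C (madd C d (ide C Z)) (madd C (ide C Z) (mneg C d)) = ide C Z" .
  have "cmp C (madd C (ide C Z) (mneg C d)) (madd C d (ide C Z))
     = madd C (cmp C (ide C Z) (madd C d (ide C Z))) (cmp C (mneg C d) (madd C d (ide C Z)))"
    using distl[OF add_hom[OF d i] i nd] .
  also have "\<dots> = madd C (madd C d (ide C Z)) (madd C (mzero C Z Z) (mneg C d))"
    using distr[OF d i nd] ndd d nd i idl[OF add_hom[OF d i]] by simp
  also have "\<dots> = madd C (madd C d (ide C Z)) (mneg C d)" using nd by simp
  also have "\<dots> = ide C Z"
    using add_comm[OF d i] add_assoc[OF i d nd] add_neg[OF d] add_zero[OF i] by simp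
  finally show "cmp C (madd C (ide C Z) (mneg C d)) (madd C d (ide C Z)) = ide C Z" .
qed

lemma endo_iso: assumes dt: "(A, B, Z, f, g, h) \<in> dist C" and e: "e \<in> hom C Z Z"
  and eg: "cmp C e g = g" and he: "cmp C h e = h"
  shows "\<exists>e' \<in> hom C Z Z. cmp C e' e = ide C Z \<and> cmp C e e' = ide C Z"
proof -
  have t: "A \<in> obj C" "B \<in> obj C" "Z \<in> obj C" "f \<in> hom C A B" "g \<in> hom C B Z" "h \<in> hom C Z (sh C A)"
    using dist_tri[OF dt] by blast+
  have i: "ide C Z \<in> hom C Z Z" using t by simp
  define d where "d = madd C e (mneg C (ide C Z))"
  have d: "d \<in> hom C Z Z" using d_def e i by blast
  have dg: "cmp C d g = mzero C B Z"
    using d_def distl[OF t(5) e neg_hom[OF i]] comp_neg_l[OF t(5) i] eg t add_neg[OF t(5)] by simp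
  have hd: "cmp C h d = mzero C Z (sh C A)"
    using d_def distr[OF e neg_hom[OF i] t(6)] comp_neg_r[OF i t(6)] he t add_neg[OF t(6)] by simp
  have r: "(B, Z, sh C A, g, h, mneg C (shm C f)) \<in> dist C" using rot[OF dt] .
  obtain c1 where c1: "c1 \<in> hom C (sh C A) Z" "d = cmp C c1 h" using exact_contra[OF r d dg] by blast
  obtain c2 where c2: "c2 \<in> hom C Z B" "d = cmp C g c2" using exact_cov[OF r d hd] by blast
  have hg: "cmp C h g = mzero C B (sh C A)" using comp_zero_tri[OF r] .
  have "cmp C d d = cmp C c1 (cmp C (cmp C h g) c2)"
    using c1 c2 assoc[OF c2(1) t(5) t(6)] assoc[OF comp_hom[OF c2(1) t(5)] t(6) c1(1)] by simp
  then have dd: "cmp C d d = mzero C Z Z" using hg c1 c2 t by simp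
  have ee: "e = madd C d (ide C Z)"
    using d_def add_assoc[OF e neg_hom[OF i] i] e i by simp
  show ?thesis using nilp_inv[OF d dd] ee d i by blast
qed

lemma five_id: assumes d1: "(A, B, Z, f, g, h) \<in> dist C" and d2: "(A, B, Z', f, g', h') \<in> dist C"
  and w: "w \<in> hom C Z Z'" and wg: "cmp C w g = g'" and hw: "h = cmp C h' w"
  shows "iso_mor C Z Z' w"
proof -
  have t: "A \<in> obj C" "B \<in> obj C" "Z \<in> obj C" "f \<in> hom C A B" "g \<in> hom C B Z" "h \<in> hom C Z (sh C A)"
    using dist_tri[OF d1] by blast+
  have t': "Z' \<in> obj C" "g' \<in> hom C B Z'" "h' \<in> hom C Z' (sh C A)"
    using dist_tri[OF d2] by blast+
  obtain w' where w': "w' \<in> hom C Z' Z" "cmp C w' g' = cmp C g (ide C B)"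
      "cmp C (shm C (ide C A)) h' = cmp C h w'"
    using tr3[OF d2 d1 id_hom[OF t(1)] id_hom[OF t(2)]] t by auto
  have w'g: "cmp C w' g' = g" and hw': "h' = cmp C h w'" using w' t t' by simp_all
  have e1: "cmp C w' w \<in> hom C Z Z" using w w' by blast
  have "cmp C (cmp C w' w) g = cmp C w' (cmp C w g)" using assoc[OF t(5) w w'(1)] .
  also have "\<dots> = g" using wg w'g by simp
  finally have c1: "cmp C (cmp C w' w) g = g" .
  have "cmp C h (cmp C w' w) = cmp C (cmp C h w') w" using assoc[OF w w'(1) t(6)] by simp
  also have "\<dots> = h" by (simp only: hw'[symmetric] hw[symmetric])
  finally have c2: "cmp C h (cmp C w' w) = h" .
  from c1 c2 obtain a where a: "a \<in> hom C Z Z" "cmp C a (cmp C w' w) = ide C Z"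
    using endo_iso[OF d1 e1] by blast
  have e2: "cmp C w w' \<in> hom C Z' Z'" using w w' by blast
  have "cmp C (cmp C w w') g' = cmp C w (cmp C w' g')" using assoc[OF t'(2) w'(1) w] .
  also have "\<dots> = g'" using wg w'g by simp
  finally have c3: "cmp C (cmp C w w') g' = g'" .
  have "cmp C h' (cmp C w w') = cmp C (cmp C h' w) w'" using assoc[OF w'(1) w t'(3)] by simp
  also have "\<dots> = h'" by (simp only: hw'[symmetric] hw[symmetric])
  finally have c4: "cmp C h' (cmp C w w') = h'" .
  from c3 c4 obtain b where b: "b \<in> hom C Z' Z'" "cmp C (cmp C w w') b = ide C Z'"
    using endo_iso[OF d2 e2] by blast
  have x: "cmp C a w' \<in> hom C Z' Z" using a w' by blast
  have l: "cmp C (cmp C a w') w = ide C Z" using assoc[OF w w'(1) a(1)] a by simp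
  have "cmp C a w' = cmp C (cmp C a w') (cmp C (cmp C w w') b)" using b x by simp
  also have "\<dots> = cmp C (cmp C (cmp C a w') w) (cmp C w' b)"
    using assoc[OF b(1) w'(1) w] assoc[OF comp_hom[OF b(1) w'(1)] w x] by simp
  also have "\<dots> = cmp C w' b" using l idl[OF comp_hom[OF b(1) w'(1)]] by simp
  finally have aw: "cmp C a w' = cmp C w' b" .
  have "cmp C w (cmp C a w') = ide C Z'" using aw assoc[OF b(1) w'(1) w] b by simp
  then show ?thesis unfolding iso_mor_def using w x l by blast
qed

lemma iso_closed: assumes d: "(A, B, Z, f, g, h) \<in> dist C"
  and f': "f' \<in> hom C A' B'" and g': "g' \<in> hom C B' Z'" and h': "h' \<in> hom C Z' (sh C A')"
  and u: "iso_mor C A A' u" and v: "iso_mor C B B' v" and w: "iso_mor C Z Z' w"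
  and e1: "cmp C v f = cmp C f' u" and e2: "cmp C w g = cmp C g' v"
  and e3: "cmp C (shm C u) h = cmp C h' w"
  shows "(A', B', Z', f', g', h') \<in> dist C"
proof -
  have "is_triangle C (A', B', Z', f', g', h')" unfolding is_triangle_def
    using f' g' h' hom_obj by auto
  moreover have "tri_iso C (A, B, Z, f, g, h) (A', B', Z', f', g', h')"
    unfolding tri_iso_def using u v w e1 e2 e3 by auto
  ultimately show ?thesis using D1 d by blast
qed

lemma neg_id_iso: assumes X: "X \<in> obj C" shows "iso_mor C X X (mneg C (ide C X))"
proof -
  have i: "ide C X \<in> hom C X X" using X by simp
  have "cmp C (mneg C (ide C X)) (mneg C (ide C X)) = ide C X"
    using comp_neg_l[OF neg_hom[OF i] i] comp_neg_r[OF i i] neg_neg[OF i] X by simp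
  then show ?thesis unfolding iso_mor_def using neg_hom[OF i] by blast
qed

lemma unshift: assumes d: "(sh C A, sh C B, sh C Z, shm C f, shm C g, mneg C (shm C h)) \<in> dist C"
  and f: "f \<in> hom C A B" and g: "g \<in> hom C B Z" and h: "h \<in> hom C Z (sh C A)"
  shows "(A, B, Z, f, g, h) \<in> dist C"
proof -
  have o: "A \<in> obj C" "B \<in> obj C" "Z \<in> obj C" using f g hom_obj by blast+
  obtain D g' h' where dD: "(A, B, D, f, g', h') \<in> dist C" using D3 f o by blast
  have t: "D \<in> obj C" "g' \<in> hom C B D" "h' \<in> hom C D (sh C A)" using dist_tri[OF dD] by blast+
  have r3: "(sh C A, sh C B, sh C D, mneg C (shm C f), mneg C (shm C g'), mneg C (shm C h')) \<in> dist C"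
    using rot3[OF dD] .
  have sf: "shm C f \<in> hom C (sh C A) (sh C B)" and sg': "shm C g' \<in> hom C (sh C B) (sh C D)"
    and sh': "shm C h' \<in> hom C (sh C D) (sh C (sh C A))" using f t by blast+
  have iB: "ide C (sh C B) \<in> hom C (sh C B) (sh C B)" using o by simp
  have dD2: "(sh C A, sh C B, sh C D, shm C f, shm C g', mneg C (shm C h')) \<in> dist C"
  proof (rule iso_closed[OF r3 sf sg' neg_hom[OF sh'] iso_id neg_id_iso iso_id])
    show "sh C A \<in> obj C" "sh C B \<in> obj C" "sh C D \<in> obj C" using o t by simp_all
    show "cmp C (mneg C (ide C (sh C B))) (mneg C (shm C f)) = cmp C (shm C f) (ide C (sh C A))"
      using comp_neg_l[OF neg_hom[OF sf] iB] comp_neg_r[OF sf iB] sf by simp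
    show "cmp C (ide C (sh C D)) (mneg C (shm C g')) = cmp C (shm C g') (mneg C (ide C (sh C B)))"
      using comp_neg_r[OF iB sg'] sg' neg_hom[OF sg'] by simp
    show "cmp C (shm C (ide C (sh C A))) (mneg C (shm C h')) = cmp C (mneg C (shm C h')) (ide C (sh C D))"
      using neg_hom[OF sh'] o by simp
  qed
  have sA: "sh C A \<in> obj C" "sh C B \<in> obj C" using o by simp_all
  obtain w where w: "w \<in> hom C (sh C D) (sh C Z)" "cmp C w (shm C g') = cmp C (shm C g) (ide C (sh C B))"
     "cmp C (shm C (ide C (sh C A))) (mneg C (shm C h')) = cmp C (mneg C (shm C h)) w"
    using tr3[OF dD2 d id_hom[OF sA(1)] id_hom[OF sA(2)]] sf by auto
  have sg: "shm C g \<in> hom C (sh C B) (sh C Z)" and shh: "shm C h \<in> hom C (sh C Z) (sh C (sh C A))"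
    using g h by blast+
  have w2: "cmp C w (shm C g') = shm C g" using w(2) sg by simp
  have w3: "mneg C (shm C h') = cmp C (mneg C (shm C h)) w" using w(3) neg_hom[OF sh'] o by simp
  have iw: "iso_mor C (sh C D) (sh C Z) w" using five_id[OF dD2 d w(1) w2 w3] .
  obtain w0 where w0: "w0 \<in> hom C D Z" "w = shm C w0" using shm_surj[OF t(1) o(3) w(1)] by blast
  obtain wi where wi: "wi \<in> hom C (sh C Z) (sh C D)" "cmp C wi w = ide C (sh C D)" "cmp C w wi = ide C (sh C Z)"
    using iw unfolding iso_mor_def by blast
  obtain w1 where w1: "w1 \<in> hom C Z D" "wi = shm C w1" using shm_surj[OF o(3) t(1) wi(1)] by blast
  have "cmp C w1 w0 = ide C D"
    using shm_inj[OF comp_hom[OF w0(1) w1(1)] id_hom[OF t(1)]] shm_comp[OF w0(1) w1(1)] wi w0 w1 t by simp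
  moreover have "cmp C w0 w1 = ide C Z"
    using shm_inj[OF comp_hom[OF w1(1) w0(1)] id_hom[OF o(3)]] shm_comp[OF w1(1) w0(1)] wi w0 w1 o by simp
  ultimately have iw0: "iso_mor C D Z w0" unfolding iso_mor_def using w0 w1 by blast
  have e2: "cmp C w0 g' = g"
    using shm_inj[OF comp_hom[OF t(2) w0(1)] g] shm_comp[OF t(2) w0(1)] w2 w0 by simp
  have "mneg C (shm C h') = mneg C (shm C (cmp C h w0))"
    using w3 comp_neg_l[OF shm_hom[OF w0(1)] shh] shm_comp[OF w0(1) h] w0 by simp
  then have "shm C h' = shm C (cmp C h w0)" using neg_inj sh' shm_hom[OF comp_hom[OF w0(1) h]] by blast
  then have e3: "h' = cmp C h w0" using shm_inj t(3) comp_hom[OF w0(1) h] by blast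
  show ?thesis
  proof (rule iso_closed[OF dD f g h iso_id iso_id iw0])
    show "A \<in> obj C" "B \<in> obj C" using o by simp_all
    show "cmp C (ide C B) f = cmp C f (ide C A)" using f by simp
    show "cmp C w0 g' = cmp C g (ide C B)" using e2 g by simp
    show "cmp C (shm C (ide C A)) h' = cmp C h w0" using e3 t o by simp
  qed
qed

end


context TC begin

lemma iso_hom_zero: assumes i: "iso_mor C Z Z2 p" and z: "hom C W Z2 = {mzero C W Z2}"
  and W: "W \<in> obj C" shows "hom C W Z = {mzero C W Z}"
proof -
  obtain q where q: "q \<in> hom C Z2 Z" "cmp C q p = ide C Z" and p: "p \<in> hom C Z Z2"
    using i unfolding iso_mor_def by blast
  have Z: "Z \<in> obj C" using p hom_obj by blast
  have "psi = mzero C W Z" if psi: "psi \<in> hom C W Z" for psi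
  proof -
    have "psi = cmp C (cmp C q p) psi" using q idl[OF psi] by simp
    also have "\<dots> = cmp C q (cmp C p psi)" using assoc[OF psi p q(1)] .
    also have "cmp C p psi = mzero C W Z2" using z comp_hom[OF psi p] by blast
    finally show ?thesis using comp_zero_r[OF q(1) W] by simp
  qed
  then show ?thesis using W Z by blast
qed

lemma negz: assumes g: "g \<in> hom C B Z" and psi: "psi \<in> hom C W B" and e: "cmp C g psi = mzero C W Z"
  shows "cmp C (mneg C g) psi = mzero C W Z"
  using comp_neg_l[OF psi g] e neg_zero hom_obj psi g by metis

lemma ext_zero: "ext1_zero C A B \<Longrightarrow> X \<in> A \<Longrightarrow> Y \<in> B \<Longrightarrow> hom C X (sh C Y) = {mzero C X (sh C Y)}"
  unfolding ext1_zero_def by blast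

end

theorem claim3p2:
  fixes C :: "('o, 'm) tcat"
    and \<S> \<T> \<U> \<V> :: "'o set"
    and X0 X S0 T U V K :: 'o
    and s a t u b w v k :: 'm
  assumes tri: "triangulated C"
    and twin: "twin_cotorsion_pair C \<S> \<T> \<U> \<V>"
    and X: "X \<in> obj C"
    and S0: "S0 = sh C X0" and S0_in: "S0 \<in> \<S>" and T_in: "T \<in> \<T>"
    and tr1: "(X0, X, T, s, a, t) \<in> dist C"
    and U_in: "U \<in> \<U>" and V_in: "V \<in> \<V>"
    and tr2: "(U, T, sh C V, u, b, w) \<in> dist C"
    and tr3: "(V, K, X, v, k, cmp C b a) \<in> dist C"
  shows "K \<in> Cminus C \<S> \<T> \<U> \<and>
         (X \<in> Cplus C \<T> \<U> \<V> \<longrightarrow> K \<in> heart C \<S> \<T> \<U> \<V>)"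
proof -
  note tr3' = tr3
  interpret TC C by (rule TC.intro[OF tri])
  have cpST: "cotorsion_pair C \<S> \<T>" and cpUV: "cotorsion_pair C \<U> \<V>"
    and eSV: "ext1_zero C \<S> \<V>" using twin unfolding twin_cotorsion_pair_def by blast+
  have eST: "ext1_zero C \<S> \<T>" using cpST unfolding cotorsion_pair_def by blast
  have eUV: "ext1_zero C \<U> \<V>" using cpUV unfolding cotorsion_pair_def by blast
  have Sobj: "\<S> \<subseteq> obj C" using cpST unfolding cotorsion_pair_def subcat_def by (elim conjE)
  have t1: "X0 \<in> obj C" "T \<in> obj C" "s \<in> hom C X0 X" "a \<in> hom C X T" "t \<in> hom C T (sh C X0)"
    using dist_tri[OF tr1] by blast+
  have t2: "U \<in> obj C" "sh C V \<in> obj C" "u \<in> hom C U T" "b \<in> hom C T (sh C V)" "w \<in> hom C (sh C V) (sh C U)"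
    using dist_tri[OF tr2] by blast+
  have t3: "V \<in> obj C" "K \<in> obj C" "v \<in> hom C V K" "k \<in> hom C K X"
    using dist_tri[OF tr3'] by blast+
  have T1: "(X, T, sh C X0, a, t, mneg C (shm C s)) \<in> dist C" using rot[OF tr1] .
  have T2: "(T, sh C V, sh C U, b, w, mneg C (shm C u)) \<in> dist C" using rot[OF tr2] .
  have T3: "(X, sh C V, sh C K, cmp C b a, mneg C (shm C v), mneg C (shm C k)) \<in> dist C"
    using rot[OF rot[OF tr3']] .
  obtain l m where lm: "(sh C X0, sh C K, sh C U, l, m, cmp C (shm C t) (mneg C (shm C u))) \<in> dist C"
    using D6[rule_format, OF T1 T2 T3] by blast
  have lm1: "l \<in> hom C (sh C X0) (sh C K)" "m \<in> hom C (sh C K) (sh C U)" using dist_tri[OF lm] by blast+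
  obtain l0 where l0: "l0 \<in> hom C X0 K" "l = shm C l0" using shm_surj[OF t1(1) t3(2) lm1(1)] by blast
  obtain m0 where m0: "m0 \<in> hom C K U" "m = shm C m0" using shm_surj[OF t3(2) t2(1) lm1(2)] by blast
  have tu: "cmp C t u \<in> hom C U (sh C X0)" using t1 t2 by blast
  have "cmp C (shm C t) (mneg C (shm C u)) = mneg C (shm C (cmp C t u))"
    using comp_neg_r[OF shm_hom[OF t2(3)] shm_hom[OF t1(5)]] shm_comp[OF t2(3) t1(5)] by simp
  then have "(sh C X0, sh C K, sh C U, shm C l0, shm C m0, mneg C (shm C (cmp C t u))) \<in> dist C"
    using lm l0 m0 by simp
  then have KT: "(X0, K, U, l0, m0, cmp C t u) \<in> dist C" using unshift l0 m0 tu by blast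
  have UT: "U \<in> \<T>"
  proof (rule perp[OF cpST t2(1)])
    fix S' assume S': "S' \<in> \<S>"
    have So: "S' \<in> obj C" using S' Sobj by blast
    have "phi = mzero C S' (sh C U)" if phi: "phi \<in> hom C S' (sh C U)" for phi
    proof (rule exz[OF rot[OF T2]])
      show "hom C S' (sh C V) = {mzero C S' (sh C V)}" using ext_zero[OF eSV S' V_in] .
      show "phi \<in> hom C S' (sh C U)" by (rule phi)
      have "cmp C (mneg C (shm C u)) phi \<in> hom C S' (sh C T)" using phi t2 by blast
      then show "cmp C (mneg C (shm C u)) phi = mzero C S' (sh C T)" using ext_zero[OF eST S' T_in] by blast
    qed
    then show "hom C S' (sh C U) = {mzero C S' (sh C U)}" using So t2 by blast
  qed
  have X0S: "X0 \<in> shift_down C \<S>" unfolding shift_down_def using t1 S0 S0_in by blast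
  have P1: "K \<in> Cminus C \<S> \<T> \<U>" unfolding Cminus_def star_def
    using t3(2) X0S UT U_in KT by blast
  have P2: "K \<in> Cplus C \<T> \<U> \<V>" if XP: "X \<in> Cplus C \<T> \<U> \<V>"
  proof -
    obtain W' Z' x c e where W': "W' \<in> \<T>" "W' \<in> \<U>" and Z': "Z' \<in> shift_up C \<V>"
      and dX: "(W', X, Z', x, c, e) \<in> dist C"
      using XP unfolding Cplus_def star_def by blast
    obtain V' where V': "V' \<in> \<V>" "isomorphic C Z' (sh C V')" using Z' unfolding shift_up_def by blast
    obtain p where p: "iso_mor C Z' (sh C V') p" using V' unfolding isomorphic_def by blast
    have tX: "W' \<in> obj C" "Z' \<in> obj C" "x \<in> hom C W' X" "c \<in> hom C X Z'" using dist_tri[OF dX] by blast+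
    have "K \<in> star C \<U> (shift_up C \<V>)" using t3(2) cpUV unfolding cotorsion_pair_def by blast
    then obtain UK ZK al be ga where UK: "UK \<in> \<U>" and ZK: "ZK \<in> shift_up C \<V>"
      and dK: "(UK, K, ZK, al, be, ga) \<in> dist C" unfolding star_def by blast
    obtain VK where VK: "VK \<in> \<V>" "isomorphic C ZK (sh C VK)" using ZK unfolding shift_up_def by blast
    obtain pK where pK: "iso_mor C ZK (sh C VK) pK" using VK unfolding isomorphic_def by blast
    have tK: "UK \<in> obj C" "ZK \<in> obj C" "al \<in> hom C UK K" using dist_tri[OF dK] by blast+
    have cka: "cmp C c (cmp C k al) = mzero C UK Z'"
    proof -
      have "hom C UK Z' = {mzero C UK Z'}"
        using iso_hom_zero[OF p ext_zero[OF eUV UK V'(1)] tK(1)] .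
      moreover have "cmp C c (cmp C k al) \<in> hom C UK Z'" using tX tK t3 by blast
      ultimately show ?thesis by blast
    qed
    have UKT: "UK \<in> \<T>"
    proof (rule perp[OF cpST tK(1)])
      fix S' assume S': "S' \<in> \<S>"
      have So: "S' \<in> obj C" using S' Sobj by blast
      have "phi = mzero C S' (sh C UK)" if phi: "phi \<in> hom C S' (sh C UK)" for phi
      proof -
        define psi where "psi = cmp C (shm C al) phi"
        have psi: "psi \<in> hom C S' (sh C K)" using psi_def phi tK by blast
        define psi1 where "psi1 = cmp C (shm C k) psi"
        have psi1: "psi1 \<in> hom C S' (sh C X)" using psi1_def psi t3 by blast
        have "cmp C (shm C c) psi1 = cmp C (shm C (cmp C c (cmp C k al))) phi"
          using psi1_def psi_def shm_comp[OF comp_hom[OF tK(3) t3(4)] tX(4)] shm_comp[OF tK(3) t3(4)]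
            assoc[OF phi shm_hom[OF tK(3)] shm_hom[OF t3(4)]]
            assoc[OF phi comp_hom[OF shm_hom[OF tK(3)] shm_hom[OF t3(4)]] shm_hom[OF tX(4)]]
            assoc[OF psi shm_hom[OF t3(4)] shm_hom[OF tX(4)]]
            assoc[OF shm_hom[OF tK(3)] shm_hom[OF t3(4)] shm_hom[OF tX(4)]]
          by (metis)
        also have "\<dots> = mzero C S' (sh C Z')" using cka tK tX So phi by simp
        finally have c1: "cmp C (shm C c) psi1 = mzero C S' (sh C Z')" .
        have p1: "psi1 = mzero C S' (sh C X)"
        proof (rule exz[OF rot3[OF dX] _ psi1])
          show "hom C S' (sh C W') = {mzero C S' (sh C W')}" using ext_zero[OF eST S' W'(1)] .
          show "cmp C (mneg C (shm C c)) psi1 = mzero C S' (sh C Z')"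
            using negz[OF shm_hom[OF tX(4)] psi1 c1] .
        qed
        have p2: "psi = mzero C S' (sh C K)"
        proof (rule exz[OF rot3[OF tr3'] _ psi])
          show "hom C S' (sh C V) = {mzero C S' (sh C V)}" using ext_zero[OF eSV S' V_in] .
          show "cmp C (mneg C (shm C k)) psi = mzero C S' (sh C X)"
            using negz[OF shm_hom[OF t3(4)] psi] p1 psi1_def by simp
        qed
        show ?thesis
        proof (rule exz[OF rot[OF rot[OF dK]] _ phi])
          show "hom C S' ZK = {mzero C S' ZK}"
            using iso_hom_zero[OF pK ext_zero[OF eSV S' VK(1)] So] .
          show "cmp C (mneg C (shm C al)) phi = mzero C S' (sh C K)"
            using negz[OF shm_hom[OF tK(3)] phi] p2 psi_def by simp
        qed
      qed
      then show "hom C S' (sh C UK) = {mzero C S' (sh C UK)}" using So tK by blast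
    qed
    show ?thesis unfolding Cplus_def star_def using t3(2) UKT UK ZK dK by blast
  qed
  show ?thesis using P1 P2 unfolding heart_def by blast
qed


end
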